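(* Let $\Phi$ denote the standard normal cdf and fix $\sigma>0$ and $\eta\in(0,1/6)$. For each pair $(n,d)$ let $S_1,\dots,S_n$ be independent real random variables with common cdf $G_d$. Assume there exist two sequences $\alpha^l_{n,d}$ and $\alpha^u_{n,d}$, both tending to $0$ as $n,d\to\infty$, such that for all $s\in[-d^\eta,d^\eta]$, $$(1+\alpha^l_{n,d})\,\Phi(s)\le G_d(s)\le (1+\alpha^u_{n,d})\,\Phi(s).$$ Let $S_{(1)}\le\dots\le S_{(n)}$ be the order statistics of $S_1,\dots,S_n$ and define $$T_{n,d}=\sum_{\ell=2}^n e^{-\sigma\sqrt d\,(S_{(\ell)}-S_{(1)})}.$$ Then, if $n,d\to\infty$ with $\frac{\log n}{d^{2\eta}}\to 0$, we have $E(T_{n,d}\mid S_{(1)})=o_p(1)$, i.e. $E(T_{n,d}\mid S_{(1)})\to 0$ in probability. *)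

theory Defs
  imports "HOL-Probability.Probability"
begin

definition std_normal_cdf :: "real \<Rightarrow> real" where
  "std_normal_cdf s = cdf (density lborel std_normal_density) s"

text \<open>Order statistics of the sample X 0, ..., X (n-1): order_stat X n l is the l-th
  smallest value (1-indexed, 1 \<le> l \<le> n).\<close>
definition order_stat :: "(nat \<Rightarrow> real) \<Rightarrow> nat \<Rightarrow> nat \<Rightarrow> real" where
  "order_stat X n l = sort (map X [0..<n]) ! (l - 1)"

definition T_stat :: "real \<Rightarrow> nat \<Rightarrow> nat \<Rightarrow> (nat \<Rightarrow> real) \<Rightarrow> real" where
  "T_stat \<sigma> n d X = (\<Sum>l = 2..n. exp (- \<sigma> * sqrt (real d) * (order_stat X n l - order_stat X n 1)))"

end

theory Submission
  imports Defs "HOL-Real_Asymp.Real_Asymp"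
begin


lemma std_normal_real_distribution: "real_distribution (density lborel std_normal_density)"
  by (simp add: real_distribution_def real_distribution_axioms_def prob_space_normal_density)

lemma measure_std_normal: 
  assumes "A \<in> sets borel"
  shows "measure (density lborel std_normal_density) A = (LBINT t:A. std_normal_density t)"
proof -
  have i: "integrable lborel (\<lambda>t. indicator A t *\<^sub>R std_normal_density t)"
    using assms by (intro integrable_mult_indicator) auto
  have "emeasure (density lborel std_normal_density) A = (\<integral>\<^sup>+ t. ennreal (std_normal_density t) * indicator A t \<partial>lborel)"
    using assms by (simp add: emeasure_density)
  also have "\<dots> = (\<integral>\<^sup>+ t. ennreal (indicator A t *\<^sub>R std_normal_density t) \<partial>lborel)"
    by (intro nn_integral_cong) (auto simp: indicator_def)
  also have "\<dots> = ennreal (\<integral> t. indicator A t *\<^sub>R std_normal_density t \<partial>lborel)"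
    using i by (intro nn_integral_eq_integral) auto
  finally show ?thesis unfolding measure_def set_lebesgue_integral_def
    by (simp add: integral_nonneg)
qed


abbreviation "\<Phi> \<equiv> std_normal_cdf"
abbreviation "\<phi> \<equiv> std_normal_density"

lemma Phi_diff:
  assumes "y \<le> x"
  shows "\<Phi> x - \<Phi> y = (LBINT t=y..x. \<phi> t)"
proof (cases "y = x")
  case True then show ?thesis by simp
next
  case False
  then have yx: "y < x" using assms by simp
  interpret real_distribution "density lborel std_normal_density" by (rule std_normal_real_distribution)
  have "\<Phi> x - \<Phi> y = measure (density lborel std_normal_density) {y<..x}"
    unfolding std_normal_cdf_def using cdf_diff_eq[OF yx] by simp
  also have "\<dots> = (LBINT t:{y<..x}. \<phi> t)"
    by (rule measure_std_normal) simp
  also have "\<dots> = (LBINT t=y..x. \<phi> t)" using assms by (simp add: interval_integral_Ioc)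
  finally show ?thesis .
qed

lemma Phi_eq: "\<Phi> u = \<Phi> 0 + (LBINT t=ereal 0..ereal u. \<phi> t)"
proof (cases "0 \<le> u")
  case True then show ?thesis using Phi_diff[of 0 u] by (simp add: zero_ereal_def)
next
  case False then show ?thesis using Phi_diff[of u 0]
    by (simp add: interval_integral_endpoints_reverse[of "ereal 0" "ereal u"])
qed

lemma Phi_deriv: "(\<Phi> has_real_derivative \<phi> x) (at x)"
proof -
  define a where "a = - \<bar>x\<bar> - 1"
  define b where "b = \<bar>x\<bar> + 1"
  have cont: "continuous_on {a..b} \<phi>"
    unfolding std_normal_density_def by (intro continuous_intros) auto
  have "((\<lambda>u. LBINT y=ereal 0..ereal u. \<phi> y) has_vector_derivative (\<phi> x)) (at x within {a..b})"
    by (rule interval_integral_FTC2[OF _ _ cont]) (auto simp: a_def b_def)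
  then have "((\<lambda>u. \<Phi> 0 + (LBINT y=ereal 0..ereal u. \<phi> y)) has_vector_derivative (\<phi> x)) (at x within {a..b})"
    by (auto intro!: derivative_eq_intros)
  then have "(\<Phi> has_vector_derivative (\<phi> x)) (at x within {a..b})"
    by (rule has_vector_derivative_weaken[where S="{a..b}"]) (auto simp: Phi_eq[symmetric] a_def b_def)
  then have "(\<Phi> has_vector_derivative (\<phi> x)) (at x within {a<..<b})"
    by (rule has_vector_derivative_within_subset) auto
  then have "(\<Phi> has_vector_derivative (\<phi> x)) (at x)"
    by (subst (asm) has_vector_derivative_within_open) (auto simp: a_def b_def)
  then show ?thesis by (simp add: has_real_derivative_iff_has_vector_derivative)
qed

lemma phi_deriv: "(\<phi> has_real_derivative (- x * \<phi> x)) (at x)"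
proof -
  have s: "sqrt (2*pi) * sqrt (2*pi) = 2*pi" by simp
  show ?thesis unfolding std_normal_density_def
    by (auto intro!: derivative_eq_intros simp: power2_eq_square field_simps s)
qed

lemma Phi_lim_bot: "(\<Phi> \<longlongrightarrow> 0) at_bot"
proof -
  interpret real_distribution "density lborel std_normal_density" by (rule std_normal_real_distribution)
  show ?thesis unfolding std_normal_cdf_def[abs_def] by (rule cdf_lim_at_bot)
qed

lemma Phi_nonneg: "0 \<le> \<Phi> x"
proof -
  interpret real_distribution "density lborel std_normal_density" by (rule std_normal_real_distribution)
  show ?thesis unfolding std_normal_cdf_def by (rule cdf_nonneg)
qed

lemma Phi_le1: "\<Phi> x \<le> 1"
proof -
  interpret real_distribution "density lborel std_normal_density" by (rule std_normal_real_distribution)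
  show ?thesis unfolding std_normal_cdf_def by (rule cdf_bounded_prob)
qed

lemma Phi_mono: "x \<le> y \<Longrightarrow> \<Phi> x \<le> \<Phi> y"
proof -
  interpret real_distribution "density lborel std_normal_density" by (rule std_normal_real_distribution)
  show "x \<le> y \<Longrightarrow> ?thesis" unfolding std_normal_cdf_def by (rule cdf_nondecreasing)
qed

lemma lim_nonneg_of_mono:
  fixes h :: "real \<Rightarrow> real"
  assumes lim: "(h \<longlongrightarrow> 0) at_bot" and mono: "\<And>y. y \<le> x \<Longrightarrow> h y \<le> h x"
  shows "0 \<le> h x"
proof (rule tendsto_le[OF _ tendsto_const lim])
  show "at_bot \<noteq> (bot :: real filter)" by simp
  show "\<forall>\<^sub>F y in at_bot. h y \<le> h x"
    using mono by (auto simp: eventually_at_bot_linorder)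
qed

lemma phi_lim1: "((\<lambda>u. \<phi> u / (1 - u)) \<longlongrightarrow> 0) at_bot"
  unfolding std_normal_density_def by real_asymp

lemma phi_lim2: "((\<lambda>u. \<phi> u / (- u)) \<longlongrightarrow> 0) at_bot"
  unfolding std_normal_density_def by real_asymp

lemma mills_lower:
  assumes "x \<le> 0"
  shows "\<phi> x \<le> (1 - x) * \<Phi> x"
proof -
  define h where "h u = \<Phi> u - \<phi> u / (1 - u)" for u
  have "0 \<le> h x"
  proof (rule lim_nonneg_of_mono[of h x])
    show "(h \<longlongrightarrow> 0) at_bot" unfolding h_def
      using tendsto_diff[OF Phi_lim_bot phi_lim1] by simp
    fix y assume "y \<le> x"
    show "h y \<le> h x"
    proof (rule DERIV_nonneg_imp_nondecreasing[OF \<open>y \<le> x\<close>])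
      fix u assume u: "y \<le> u" "u \<le> x"
      then have u0: "u \<le> 0" using assms by simp
      have d: "(h has_real_derivative (\<phi> u - ((- u * \<phi> u) * (1 - u) + \<phi> u) / (1 - u)^2)) (at u)"
        unfolding h_def using u0
        by (auto intro!: derivative_eq_intros Phi_deriv phi_deriv simp: power2_eq_square)
      have "(- u * \<phi> u) * (1 - u) + \<phi> u \<le> \<phi> u * (1 - u)^2"
      proof -
        have "(- u * \<phi> u) * (1 - u) + \<phi> u = \<phi> u * (1 - u + u^2)"
          by (simp add: algebra_simps power2_eq_square)
        also have "\<dots> \<le> \<phi> u * (1 - u)^2"
          using u0 by (intro mult_left_mono) (auto simp: power2_eq_square algebra_simps)
        finally show ?thesis .
      qed
      then have "0 \<le> \<phi> u - ((- u * \<phi> u) * (1 - u) + \<phi> u) / (1 - u)^2"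
        using u0 by (simp add: field_simps)
      then show "\<exists>d. (h has_real_derivative d) (at u) \<and> 0 \<le> d" using d by blast
    qed
  qed
  then show ?thesis using assms unfolding h_def by (simp add: field_simps)
qed

lemma mills_upper:
  assumes "x < 0"
  shows "\<Phi> x \<le> \<phi> x / (- x)"
proof -
  define h where "h u = \<phi> u / (- u) - \<Phi> u" for u
  have "0 \<le> h x"
  proof (rule lim_nonneg_of_mono[of h x])
    show "(h \<longlongrightarrow> 0) at_bot" unfolding h_def
      using tendsto_diff[OF phi_lim2 Phi_lim_bot] by simp
    fix y assume "y \<le> x"
    show "h y \<le> h x"
    proof (rule DERIV_nonneg_imp_nondecreasing[OF \<open>y \<le> x\<close>])
      fix u assume u: "y \<le> u" "u \<le> x"
      then have u0: "u < 0" using assms by simp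
      have d: "(h has_real_derivative (((- u * \<phi> u) * (- u) + \<phi> u) / (- u)^2 - \<phi> u)) (at u)"
        unfolding h_def using u0
        by (auto intro!: derivative_eq_intros Phi_deriv phi_deriv simp: power2_eq_square) (simp add: field_simps)
      have "((- u * \<phi> u) * (- u) + \<phi> u) / (- u)^2 - \<phi> u = \<phi> u / u^2"
        using u0 by (simp add: field_simps power2_eq_square)
      also have "\<dots> \<ge> 0" by simp
      finally show "\<exists>d. (h has_real_derivative d) (at u) \<and> 0 \<le> d" using d by blast
    qed
  qed
  then show ?thesis unfolding h_def by simp
qed

lemma phi_pos: "0 < \<phi> x" by (simp add: normal_density_pos)

lemma phi_le_phi0: "\<phi> x \<le> \<phi> 0"
  unfolding std_normal_density_def by (intro mult_left_mono) auto

lemma Phi_pos: "0 < \<Phi> x"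
proof (cases "x \<le> 0")
  case True
  then have "0 < (1 - x) * \<Phi> x" using mills_lower[OF True] phi_pos[of x] by linarith
  then show ?thesis using True by (simp add: zero_less_mult_iff)
next
  case False
  have "0 < (1 - 0) * \<Phi> 0" using mills_lower[of 0] phi_pos[of 0] by linarith
  then show ?thesis using Phi_mono[of 0 x] False by simp
qed

lemma phi_le_Phi: "\<phi> x \<le> (1 + \<bar>x\<bar>) * \<Phi> x"
proof (cases "x \<le> 0")
  case True then show ?thesis using mills_lower[OF True] by simp
next
  case False
  have "\<phi> x \<le> \<phi> 0" by (rule phi_le_phi0)
  also have "\<dots> \<le> \<Phi> 0" using mills_lower[of 0] by simp
  also have "\<dots> \<le> \<Phi> x" using False by (intro Phi_mono) simp
  also have "\<dots> \<le> (1 + \<bar>x\<bar>) * \<Phi> x" using Phi_nonneg[of x] mult_right_mono[of 1 "1 + \<bar>x\<bar>" "\<Phi> x"] by simp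
  finally show ?thesis .
qed

lemma Phi_ratio:
  assumes "a \<le> b"
  shows "\<Phi> b \<le> \<Phi> a * exp ((b - a) * (1 + \<bar>a\<bar> + \<bar>b\<bar>))"
proof -
  define K where "K = 1 + \<bar>a\<bar> + \<bar>b\<bar>"
  define L where "L u = ln (\<Phi> u) - K * u" for u
  have "L b \<le> L a"
  proof (rule DERIV_nonpos_imp_nonincreasing[OF assms])
    fix u assume u: "a \<le> u" "u \<le> b"
    have d: "(L has_real_derivative (\<phi> u / \<Phi> u - K)) (at u)"
      unfolding L_def using Phi_pos[of u]
      by (auto intro!: derivative_eq_intros Phi_deriv simp: field_simps)
    have "\<phi> u \<le> (1 + \<bar>u\<bar>) * \<Phi> u" by (rule phi_le_Phi)
    also have "\<dots> \<le> K * \<Phi> u" using u Phi_pos[of u] unfolding K_def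
      by (intro mult_right_mono) auto
    finally have "\<phi> u / \<Phi> u - K \<le> 0" using Phi_pos[of u] by (simp add: field_simps)
    then show "\<exists>y. (L has_real_derivative y) (at u) \<and> y \<le> 0" using d by blast
  qed
  then have "ln (\<Phi> b) \<le> ln (\<Phi> a) + K * (b - a)" unfolding L_def by (simp add: algebra_simps)
  then have "exp (ln (\<Phi> b)) \<le> exp (ln (\<Phi> a) + K * (b - a))" by simp
  then show ?thesis using Phi_pos[of a] Phi_pos[of b] unfolding K_def
    by (simp add: exp_add mult.commute)
qed

lemma Phi_tail:
  assumes "1 \<le> t"
  shows "\<Phi> (- t) \<le> exp (- t\<^sup>2 / 2)"
proof -
  have "\<Phi> (- t) \<le> \<phi> (- t) / t" using mills_upper[of "-t"] assms by simp
  also have "\<dots> \<le> \<phi> (- t)" using assms phi_pos[of "-t"] by (simp add: divide_le_eq)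
  also have "\<dots> \<le> exp (- t\<^sup>2 / 2)" unfolding std_normal_density_def
    using pi_gt3 by (simp add: divide_le_eq real_le_rsqrt)
  finally show ?thesis .
qed


lemma F_deriv:
  fixes l :: real assumes "l > 0"
  shows "((\<lambda>x. - (x + 1 / l) * exp (- l * x) / l) has_real_derivative (x * exp (- l * x))) (at x)"
proof -
  have l: "l \<noteq> 0" using assms by simp
  have "((\<lambda>x. - (x + 1 / l) * exp (- l * x) / l) has_real_derivative
     (((- (1 + 0) * exp (- l * x) + exp (- l * x) * (0 * x + 1 * - l) * - (x + 1 / l)) * l - - (x + 1 / l) * exp (- l * x) * 0) / (l * l))) (at x)"
    using l by (auto intro!: derivative_eq_intros)
  also have "(((- (1 + 0) * exp (- l * x) + exp (- l * x) * (0 * x + 1 * - l) * - (x + 1 / l)) * l - - (x + 1 / l) * exp (- l * x) * 0) / (l * l)) = x * exp (- l * x)"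
    using l by (simp add: field_simps)
  finally show ?thesis .
qed

lemma F_step:
  fixes l m \<epsilon> a b :: real
  assumes l: "l = m / (1 + \<epsilon>)" and m: "m > 0" and e: "\<epsilon> \<ge> 0"
    and ab: "0 \<le> a" "a \<le> b" "b \<le> (1 + \<epsilon>) * a"
  shows "(b - a) * (a * exp (- m * a)) \<le> (- (b + 1 / l) * exp (- l * b) / l) - (- (a + 1 / l) * exp (- l * a) / l)"
proof -
  have lpos: "l > 0" using l m e by simp
  define F where "F x = - (x + 1 / l) * exp (- l * x) / l" for x
  define c where "c = a * exp (- m * a)"
  define \<psi> where "\<psi> x = F x - c * x" for x
  have "\<psi> a \<le> \<psi> b"
  proof (rule DERIV_nonneg_imp_nondecreasing[OF ab(2)])
    fix x assume x: "a \<le> x" "x \<le> b"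
    have d: "(\<psi> has_real_derivative (x * exp (- l * x) - c)) (at x)"
      unfolding \<psi>_def F_def using DERIV_diff[OF F_deriv[OF lpos, of x] DERIV_cmult_Id[of c x]] by simp
    have "c = a * exp (- l * ((1 + \<epsilon>) * a))" unfolding c_def l using e by simp
    also have "\<dots> \<le> x * exp (- l * x)"
    proof (rule mult_mono)
      show "a \<le> x" using x by simp
      show "exp (- l * ((1 + \<epsilon>) * a)) \<le> exp (- l * x)"
        using x ab lpos by simp
    qed (use x ab in auto)
    finally show "\<exists>y. (\<psi> has_real_derivative y) (at x) \<and> 0 \<le> y" using d by auto
  qed
  then show ?thesis unfolding \<psi>_def F_def c_def by (simp add: algebra_simps)
qed

lemma F_bounds:
  fixes l x :: real assumes "l > 0" "x \<ge> 0"
  shows "- (x + 1 / l) * exp (- l * x) / l \<le> 0"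
    "- 1 / l^2 \<le> - (x + 1 / l) * exp (- l * x) / l"
proof -
  show "- (x + 1 / l) * exp (- l * x) / l \<le> 0" proof -
    have "0 < 1 / l" using assms by simp
    then have "0 \<le> x + 1 / l" using assms by linarith
    then have "- (x + 1 / l) * exp (- l * x) \<le> 0" by (intro mult_nonpos_nonneg) auto
    then show ?thesis using assms by (intro divide_nonpos_pos) auto
  qed
  have "- (0 + 1 / l) * exp (- l * 0) / l \<le> - (x + 1 / l) * exp (- l * x) / l"
  proof (rule DERIV_nonneg_imp_nondecreasing[OF assms(2)])
    fix y assume "0 \<le> y" "y \<le> x"
    then show "\<exists>d. ((\<lambda>x. - (x + 1 / l) * exp (- l * x) / l) has_real_derivative d) (at y) \<and> 0 \<le> d"
      using F_deriv[OF assms(1), of y] by auto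
  qed
  then show "- 1 / l^2 \<le> - (x + 1 / l) * exp (- l * x) / l" by (simp add: power2_eq_square)
qed

lemma tele_bound:
  fixes q :: "nat \<Rightarrow> real" and \<epsilon> m :: real
  assumes mono: "\<And>r. q r \<le> q (Suc r)" and q0: "0 \<le> q 0"
    and step: "\<And>r. r < R \<Longrightarrow> q (r + 2) \<le> (1 + \<epsilon>) * q r"
    and e: "0 \<le> \<epsilon>" and m: "0 < m"
  shows "(\<Sum>r<R. (q (r + 2) - q r)^2 * exp (- m * q r)) \<le> 2 * \<epsilon> * ((1 + \<epsilon>) / m)^2"
proof -
  define l where "l = m / (1 + \<epsilon>)"
  have lpos: "l > 0" using m e by (simp add: l_def)
  define F where "F x = - (x + 1 / l) * exp (- l * x) / l" for x
  have qmono: "q i \<le> q j" if "i \<le> j" for i j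
    using that by (induction j) (auto intro: order_trans[OF _ mono] simp: le_Suc_eq)
  have qnn: "0 \<le> q i" for i using qmono[of 0 i] q0 by simp
  have tm: "(q (r + 2) - q r)^2 * exp (- m * q r) \<le> \<epsilon> * (F (q (r + 2)) - F (q r))" if "r < R" for r
  proof -
    have d0: "0 \<le> q (r + 2) - q r" using qmono[of r "r+2"] by simp
    have d1: "q (r + 2) - q r \<le> \<epsilon> * q r" using step[OF that] by (simp add: algebra_simps)
    have "(q (r + 2) - q r)^2 * exp (- m * q r) = (q (r + 2) - q r) * ((q (r + 2) - q r) * exp (- m * q r))"
      by (simp add: power2_eq_square)
    also have "\<dots> \<le> (q (r + 2) - q r) * ((\<epsilon> * q r) * exp (- m * q r))"
      using d0 d1 by (intro mult_left_mono mult_right_mono) auto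
    also have "\<dots> = \<epsilon> * ((q (r + 2) - q r) * (q r * exp (- m * q r)))" by (simp add: algebra_simps)
    also have "\<dots> \<le> \<epsilon> * (F (q (r + 2)) - F (q r))"
      unfolding F_def using e
      by (intro mult_left_mono F_step[OF l_def m e]) (use qnn qmono[of r "r+2"] step[OF that] in auto)
    finally show ?thesis .
  qed
  have "(\<Sum>r<R. (q (r + 2) - q r)^2 * exp (- m * q r)) \<le> (\<Sum>r<R. \<epsilon> * (F (q (r + 2)) - F (q r)))"
    by (intro sum_mono tm) auto
  also have "\<dots> = \<epsilon> * ((\<Sum>r<R. F (q (Suc r + 1)) - F (q (r + 1))) + (\<Sum>r<R. F (q (Suc r)) - F (q r)))"
  proof -
    have "(\<Sum>r<R. \<epsilon> * (F (q (r + 2)) - F (q r))) = \<epsilon> * (\<Sum>r<R. F (q (r + 2)) - F (q r))"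
      by (rule sum_distrib_left[symmetric])
    moreover have "(\<Sum>r<R. F (q (r + 2)) - F (q r)) = (\<Sum>r<R. (F (q (Suc r + 1)) - F (q (r + 1))) + (F (q (Suc r)) - F (q r)))"
      by (intro sum.cong) (auto simp: numeral_2_eq_2)
    moreover have "\<dots> = (\<Sum>r<R. F (q (Suc r + 1)) - F (q (r + 1))) + (\<Sum>r<R. F (q (Suc r)) - F (q r))"
      by (rule sum.distrib)
    ultimately show ?thesis by simp
  qed
  also have "\<dots> = \<epsilon> * ((F (q (R + 1)) - F (q 1)) + (F (q R) - F (q 0)))"
    using sum_lessThan_telescope[of "\<lambda>r. F (q (r + 1))" R] sum_lessThan_telescope[of "\<lambda>r. F (q r)" R]
    by (simp only: One_nat_def add_0)
  also have "\<dots> \<le> \<epsilon> * (2 / l^2)"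
  proof (intro mult_left_mono e)
    have u: "F x \<le> 0" if "0 \<le> x" for x unfolding F_def by (rule F_bounds(1)[OF lpos that])
    have lo: "- 1 / l^2 \<le> F x" if "0 \<le> x" for x unfolding F_def by (rule F_bounds(2)[OF lpos that])
    have "- 1 / l^2 = - (1 / l^2)" by simp
    then show "F (q (R + 1)) - F (q 1) + (F (q R) - F (q 0)) \<le> 2 / l\<^sup>2"
      using u[OF qnn[of "R+1"]] lo[OF qnn[of 1]] u[OF qnn[of R]] lo[OF qnn[of 0]] by linarith
  qed
  also have "\<dots> = 2 * \<epsilon> * ((1 + \<epsilon>) / m)^2" unfolding l_def using e m by (simp add: field_simps power2_eq_square)
  finally show ?thesis .
qed


lemma sum_list_map_mset:
  fixes f :: "'a \<Rightarrow> 'b::comm_monoid_add"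
  assumes "mset xs = mset ys"
  shows "sum_list (map f xs) = sum_list (map f ys)"
proof -
  have "sum_list (map f xs) = sum_mset (mset (map f xs))" by (simp only: sum_mset_sum_list)
  also have "\<dots> = sum_mset (mset (map f ys))" by (simp only: mset_map assms)
  also have "\<dots> = sum_list (map f ys)" by (simp only: sum_mset_sum_list)
  finally show ?thesis .
qed

lemma order_stat_1:
  fixes x :: "nat \<Rightarrow> real"
  assumes "n \<ge> 1"
  shows "order_stat x n 1 = Min (x ` {..<n})"
proof -
  define xs where "xs = sort (map x [0..<n])"
  have lxs: "length xs = n" by (simp add: xs_def)
  then have ne: "xs \<noteq> []" using assms by auto
  then obtain a ys where xs: "xs = a # ys" by (cases xs) auto
  have s: "sorted xs" by (simp add: xs_def)
  have set: "set xs = x ` {..<n}" by (auto simp: xs_def)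
  have "Min (set xs) = a"
    by (rule Min_eqI) (use s xs in auto)
  then show ?thesis unfolding order_stat_def xs_def[symmetric] using set xs by simp
qed

lemma T_stat_repr:
  fixes x :: "nat \<Rightarrow> real"
  assumes "n \<ge> 1"
  shows "T_stat \<sigma> n d x = (\<Sum>i<n. exp (- \<sigma> * sqrt (real d) * (x i - Min (x ` {..<n})))) - 1"
proof -
  define xs where "xs = sort (map x [0..<n])"
  have lxs: "length xs = n" by (simp add: xs_def)
  then have ne: "xs \<noteq> []" using assms by auto
  then obtain a ys where xs: "xs = a # ys" by (cases xs) auto
  have len: "length ys = n - 1" using lxs xs by auto
  have m: "order_stat x n 1 = a" unfolding order_stat_def xs_def[symmetric] xs by simp
  have mn: "Min (x ` {..<n}) = a" using order_stat_1[OF assms, of x] m by simp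
  define f where "f v = exp (- \<sigma> * sqrt (real d) * (v - a))" for v
  have "T_stat \<sigma> n d x = (\<Sum>l = 2..n. f (xs ! (l - 1)))"
    unfolding T_stat_def m unfolding order_stat_def xs_def[symmetric] f_def by simp
  also have "\<dots> = (\<Sum>j<n - 1. f (ys ! j))"
  proof -
    have "(\<Sum>l = 2..n. f (xs ! (l - 1))) = (\<Sum>j \<in> {..<n - 1}. f (xs ! ((j + 2) - 1)))"
      by (rule sum.reindex_bij_witness[where i="\<lambda>j. j + 2" and j="\<lambda>l. l - 2"]) (auto simp: numeral_2_eq_2 intro!: arg_cong[where f="\<lambda>i. f (xs ! i)"])
    also have "\<dots> = (\<Sum>j<n - 1. f (ys ! j))" by (intro sum.cong) (auto simp: xs)
    finally show ?thesis .
  qed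
  also have "\<dots> = sum_list (map f ys)"
    using len by (simp add: sum_list_sum_nth atLeast0LessThan)
  also have "\<dots> = sum_list (map f xs) - 1" by (simp add: xs f_def)
  also have "sum_list (map f xs) = sum_list (map f (map x [0..<n]))"
    by (rule sum_list_map_mset) (simp add: xs_def)
  also have "\<dots> = (\<Sum>i<n. f (x i))"
    by (simp add: sum_set_upt_conv_sum_list_nat[symmetric] atLeast0LessThan comp_def)
  finally show ?thesis by (simp add: f_def mn)
qed


locale iid = prob_space M for M :: "'a measure" +
  fixes X :: "nat \<Rightarrow> 'a \<Rightarrow> real" and n :: nat and G :: "real \<Rightarrow> real"
  assumes n1: "1 \<le> n" and meas: "\<And>i. i < n \<Longrightarrow> X i \<in> borel_measurable M"
  and indep: "indep_vars (\<lambda>_. borel) X {..<n}"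
  and cdfG: "\<And>i s. i < n \<Longrightarrow> prob (X i -` {..s} \<inter> space M) = G s"
begin

lemma ev: "i < n \<Longrightarrow> B \<in> sets borel \<Longrightarrow> X i -` B \<inter> space M \<in> events"
  using meas by (simp add: measurable_sets)

lemma ev_INT:
  assumes "\<And>k. k < n \<Longrightarrow> B k \<in> sets borel"
  shows "(\<Inter>k<n. X k -` B k \<inter> space M) \<in> events"
proof (rule sets.finite_INT)
  show "finite {..<n}" by simp
  have "0 \<in> {..<n}" using n1 by simp
  then show "{..<n} \<noteq> {}" by blast
  show "\<And>k. k \<in> {..<n} \<Longrightarrow> X k -` B k \<inter> space M \<in> events" using ev assms by auto
qed

lemma ev_UN:
  assumes "\<And>k. k < n \<Longrightarrow> B k \<in> sets borel"
  shows "(\<Union>k<n. X k -` B k \<inter> space M) \<in> events"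
proof (rule sets.finite_UN)
  show "finite {..<n}" by simp
  show "\<And>k. k \<in> {..<n} \<Longrightarrow> X k -` B k \<inter> space M \<in> events" using ev assms by auto
qed

lemma prob_Ioc: assumes "i < n" "a \<le> b" shows "prob (X i -` {a<..b} \<inter> space M) = G b - G a"
proof -
  have "X i -` {a<..b} \<inter> space M = (X i -` {..b} \<inter> space M) - (X i -` {..a} \<inter> space M)" by auto
  moreover have "prob ((X i -` {..b} \<inter> space M) - (X i -` {..a} \<inter> space M)) = prob (X i -` {..b} \<inter> space M) - prob (X i -` {..a} \<inter> space M)"
    using assms by (intro finite_measure_Diff ev) auto
  ultimately show ?thesis using cdfG[OF assms(1)] by simp
qed

lemma prob_Ioi: assumes "i < n" shows "prob (X i -` {a<..} \<inter> space M) = 1 - G a"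
proof -
  have "X i -` {a<..} \<inter> space M = space M - (X i -` {..a} \<inter> space M)" by auto
  then show ?thesis using cdfG[OF assms] prob_compl[OF ev[OF assms, of "{..a}"]] by simp
qed

lemma indep_prod:
  assumes "\<And>k. k < n \<Longrightarrow> B k \<in> sets borel"
  shows "prob (\<Inter>k<n. X k -` B k \<inter> space M) = (\<Prod>k<n. prob (X k -` B k \<inter> space M))"
proof -
  have "0 \<in> {..<n}" using n1 by simp
  then have "{..<n} \<noteq> {}" by blast
  then show ?thesis using assms by (intro indep_varsD_finite[OF indep]) auto
qed

lemma prob_all_gt: "prob (\<Inter>k<n. X k -` {a<..} \<inter> space M) = (1 - G a)^n"
proof -
  have "prob (\<Inter>k<n. X k -` {a<..} \<inter> space M) = (\<Prod>k<n. prob (X k -` {a<..} \<inter> space M))"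
    by (rule indep_prod) simp
  also have "\<dots> = (\<Prod>k<n. 1 - G a)" by (intro prod.cong) (auto simp: prob_Ioi)
  finally show ?thesis by simp
qed

lemma prob_pair:
  assumes "i < n" "j < n" "i \<noteq> j" "a \<le> b"
  shows "prob (\<Inter>k<n. X k -` (if k = i \<or> k = j then {a<..b} else {a<..}) \<inter> space M)
    = (G b - G a)^2 * (1 - G a)^(n - 2)"
proof -
  have "prob (\<Inter>k<n. X k -` (if k = i \<or> k = j then {a<..b} else {a<..}) \<inter> space M)
      = (\<Prod>k<n. prob (X k -` (if k = i \<or> k = j then {a<..b} else {a<..}) \<inter> space M))"
    by (rule indep_prod) auto
  also have "\<dots> = (\<Prod>k<n. if k = i \<or> k = j then G b - G a else 1 - G a)"
    using assms by (intro prod.cong) (auto simp: prob_Ioc prob_Ioi)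
  also have "\<dots> = (\<Prod>k\<in>{..<n} \<inter> {k. k = i \<or> k = j}. G b - G a) * (\<Prod>k\<in>{..<n} \<inter> - {k. k = i \<or> k = j}. 1 - G a)"
    by (rule prod.If_cases) simp
  also have "{..<n} \<inter> {k. k = i \<or> k = j} = {i, j}" using assms by auto
  also have "card ({..<n} \<inter> - {k. k = i \<or> k = j}) = n - 2"
  proof -
    have "{..<n} \<inter> - {k. k = i \<or> k = j} = {..<n} - {i, j}" by auto
    then show ?thesis using assms by (simp add: card_Diff_subset)
  qed
  ultimately show ?thesis using assms by (simp add: power2_eq_square)
qed

lemma prob_some_le: "prob (\<Union>i<n. X i -` {..a} \<inter> space M) \<le> n * G a"
proof -
  have "prob (\<Union>i<n. X i -` {..a} \<inter> space M) \<le> (\<Sum>i<n. prob (X i -` {..a} \<inter> space M))"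
    by (intro finite_measure_subadditive_finite) (auto intro: ev)
  also have "\<dots> = n * G a" by (simp add: cdfG)
  finally show ?thesis .
qed

end


lemma pair_count:
  fixes J :: "nat set" assumes "J \<subseteq> {..<n}"
  shows "(\<Sum>i<n. \<Sum>j<n. if i \<noteq> j \<and> i \<in> J \<and> j \<in> J then 1 else 0 :: real) = real (card J) * (real (card J) - 1)"
proof -
  have fin: "finite J" using assms finite_subset by blast
  have "(\<Sum>i<n. \<Sum>j<n. if i \<noteq> j \<and> i \<in> J \<and> j \<in> J then 1 else 0 :: real)
      = (\<Sum>i<n. if i \<in> J then real (card J) - 1 else 0)"
  proof (intro sum.cong refl)
    fix i assume i: "i \<in> {..<n}"
    have "(\<Sum>j<n. if i \<noteq> j \<and> i \<in> J \<and> j \<in> J then 1 else 0 :: real)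
        = (\<Sum>j<n. if j \<in> (if i \<in> J then J - {i} else {}) then 1 else 0)"
      by (intro sum.cong) auto
    also have "\<dots> = (\<Sum>j\<in>{..<n} \<inter> (if i \<in> J then J - {i} else {}). 1)"
      by (rule sum.inter_restrict[symmetric]) simp
    also have "\<dots> = (if i \<in> J then real (card J) - 1 else 0)"
    proof (cases "i \<in> J")
      case True
      have "{..<n} \<inter> (J - {i}) = J - {i}" using assms by auto
      moreover have "card J \<ge> 1" using True fin by (metis One_nat_def Suc_leI card_gt_0_iff empty_iff)
      ultimately show ?thesis using True fin by (simp add: card_Diff_singleton of_nat_diff)
    qed simp
    finally show "(\<Sum>j<n. if i \<noteq> j \<and> i \<in> J \<and> j \<in> J then 1 else 0 :: real) = (if i \<in> J then real (card J) - 1 else 0)" .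
  qed
  also have "\<dots> = (\<Sum>i\<in>{..<n} \<inter> J. real (card J) - 1)"
    by (rule sum.inter_restrict[symmetric]) simp
  also have "\<dots> = real (card J) * (real (card J) - 1)"
    using assms by (simp add: Int_absorb1)
  finally show ?thesis .
qed

lemma pointwise:
  fixes x :: "nat \<Rightarrow> real" and n R :: nat and c h a0 :: real
  assumes n: "1 \<le> n" and c: "0 \<le> c" and h: "0 < h"
  shows "(\<Sum>i<n. exp (- c * (x i - Min (x ` {..<n})))) - 1 \<le> n * exp (- c * h)
     + (\<Sum>r<R. \<Sum>i<n. \<Sum>j<n. if i \<noteq> j \<and> (\<forall>k<n. x k \<in> (if k = i \<or> k = j then {a0 + real r * h<..a0 + real (r + 2) * h} else {a0 + real r * h<..})) then 1 else 0)
     + (if \<exists>i<n. x i \<le> a0 then real n else 0)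
     + (if \<forall>k<n. x k > a0 + real R * h then real n else 0)"
  (is "?L \<le> ?E + (\<Sum>r<R. ?Z r) + ?T1 + ?T2")
proof -
  define m where "m = Min (x ` {..<n})"
  define a where "a r = a0 + real r * h" for r :: nat
  have "0 \<in> {..<n}" using n by simp
  then have ne: "x ` {..<n} \<noteq> {}" by blast
  have mle: "m \<le> x i" if "i < n" for i unfolding m_def using that by (intro Min_le) auto
  have "m \<in> x ` {..<n}" unfolding m_def using ne by (intro Min_in) auto
  then obtain i0 where i0: "i0 < n" "x i0 = m" by auto
  have e1: "exp (- c * (x i - m)) \<le> 1" if "i < n" for i using mle[OF that] c
    by (simp add: mult_nonneg_nonneg)
  have Lle: "?L \<le> n - 1"
  proof -
    have "(\<Sum>i<n. exp (- c * (x i - m))) \<le> (\<Sum>i<n. 1)" by (intro sum_mono e1) auto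
    then show ?thesis unfolding m_def by simp
  qed
  have Znn: "0 \<le> ?Z r" for r by (intro sum_nonneg) auto
  have E0: "0 \<le> ?E" by simp
  have T1: "0 \<le> ?T1" and T2: "0 \<le> ?T2" by auto
  show ?thesis
  proof (cases "(\<exists>i<n. x i \<le> a0) \<or> (\<forall>k<n. x k > a0 + real R * h)")
    case True
    then have "real n \<le> ?T1 + ?T2" using T1 T2 by auto
    moreover have "0 \<le> (\<Sum>r<R. ?Z r)" using Znn by (intro sum_nonneg) auto
    ultimately show ?thesis using Lle E0 by linarith
  next
    case False
    then have gt: "\<And>i. i < n \<Longrightarrow> x i > a0" and "\<exists>k<n. x k \<le> a0 + real R * h" by auto
    then obtain k0 where k0: "k0 < n" "x k0 \<le> a0 + real R * h" by auto
    have m0: "a0 < m" using gt[OF i0(1)] i0 by simp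
    have mR: "m \<le> a0 + real R * h" using mle[OF k0(1)] k0 by simp
    define t where "t = (m - a0) / h"
    have t0: "0 < t" using m0 h by (simp add: t_def)
    have tR: "t \<le> real R" using mR h by (simp add: t_def divide_le_eq algebra_simps)
    define r where "r = nat (ceiling t) - 1"
    have "0 < real_of_int (ceiling t)" using t0 le_of_int_ceiling[of t] by linarith
    then have cpos: "1 \<le> ceiling t" by simp
    have ir: "int r = ceiling t - 1" unfolding r_def using cpos by arith
    have rc: "real r = real_of_int (ceiling t) - 1" using arg_cong[OF ir, of real_of_int] by simp
    have rR: "r < R"
    proof -
      have "ceiling t \<le> int R" using tR by (simp add: ceiling_le_iff)
      then show ?thesis using cpos unfolding r_def by linarith
    qed
    have "real r < t" using rc ceiling_correct[of t] by linarith
    then have ar: "a r < m" using h unfolding a_def t_def by (simp add: field_simps)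
    have "t \<le> real r + 1" using rc le_of_int_ceiling[of t] by linarith
    then have ar1: "m \<le> a (r + 1)" using h unfolding a_def t_def by (simp add: field_simps)
    define J where "J = {i \<in> {..<n}. x i \<le> a (r + 2)}"
    have Jsub: "J \<subseteq> {..<n}" by (auto simp: J_def)
    have "a (r + 1) \<le> a (r + 2)" using h unfolding a_def by (simp add: mult_right_mono)
    then have i0J: "i0 \<in> J" unfolding J_def using i0 ar1 by auto
    have cardJ: "1 \<le> card J" using i0J Jsub finite_subset[OF Jsub] by (metis One_nat_def Suc_leI card_gt_0_iff empty_iff finite_lessThan)
    have Zr: "?Z r = real (card J) * (real (card J) - 1)"
    proof -
      have "?Z r = (\<Sum>i<n. \<Sum>j<n. if i \<noteq> j \<and> i \<in> J \<and> j \<in> J then 1 else 0 :: real)"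
      proof (intro sum.cong refl)
        fix i j assume ij: "i \<in> {..<n}" "j \<in> {..<n}"
        have "(\<forall>k<n. x k \<in> (if k = i \<or> k = j then {a0 + real r * h<..a0 + real (r + 2) * h} else {a0 + real r * h<..}))
          \<longleftrightarrow> i \<in> J \<and> j \<in> J"
        proof -
          have all: "a r < x k" if "k < n" for k using mle[OF that] ar by simp
          show ?thesis using ij all unfolding J_def a_def by auto
        qed
        then show "(if i \<noteq> j \<and> (\<forall>k<n. x k \<in> (if k = i \<or> k = j then {a0 + real r * h<..a0 + real (r + 2) * h} else {a0 + real r * h<..})) then 1 else 0)
          = (if i \<noteq> j \<and> i \<in> J \<and> j \<in> J then 1 else 0 :: real)" by simp
      qed
      also have "\<dots> = real (card J) * (real (card J) - 1)" by (rule pair_count[OF Jsub])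
      finally show ?thesis .
    qed
    have "(\<Sum>i<n. exp (- c * (x i - m))) = (\<Sum>i\<in>J. exp (- c * (x i - m))) + (\<Sum>i\<in>{..<n} - J. exp (- c * (x i - m)))"
      using Jsub by (metis (no_types, lifting) add.commute finite_lessThan sum.subset_diff)
    also have "\<dots> \<le> (\<Sum>i\<in>J. 1) + (\<Sum>i\<in>{..<n} - J. exp (- c * h))"
    proof (intro add_mono sum_mono)
      show "exp (- c * (x i - m)) \<le> 1" if "i \<in> J" for i using e1 that Jsub by auto
      fix i assume "i \<in> {..<n} - J"
      then have "x i > a (r + 2)" by (auto simp: J_def)
      then have "x i - m \<ge> h" using ar1 unfolding a_def by (simp add: algebra_simps)
      then show "exp (- c * (x i - m)) \<le> exp (- c * h)" using c by (simp add: mult_left_mono)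
    qed
    also have "\<dots> = real (card J) + real (card ({..<n} - J)) * exp (- c * h)" by simp
    also have "\<dots> \<le> real (card J) + real n * exp (- c * h)"
      by (intro add_left_mono mult_right_mono) (auto simp: card_Diff_subset[OF finite_subset[OF Jsub] Jsub] Jsub)
    finally have L1: "?L \<le> real (card J) - 1 + real n * exp (- c * h)" unfolding m_def by simp
    have "real (card J) - 1 \<le> real (card J) * (real (card J) - 1)" using cardJ
      by (metis mult_cancel_right1 mult_right_mono of_nat_1 of_nat_le_iff diff_ge_0_iff_ge order_refl)
    also have "\<dots> = ?Z r" using Zr by simp
    also have "\<dots> \<le> (\<Sum>r<R. ?Z r)" using rR Znn by (intro member_le_sum) auto
    finally show ?thesis using L1 T1 T2 by linarith
  qed
qed


context iid begin

lemma ET_bound: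
  fixes c h a0 :: real and R :: nat
  assumes c: "0 \<le> c" and h: "0 < h"
  defines "a \<equiv> \<lambda>r::nat. a0 + real r * h"
  shows "expectation (\<lambda>\<omega>. (\<Sum>i<n. exp (- c * (X i \<omega> - Min ((\<lambda>i. X i \<omega>) ` {..<n})))) - 1)
    \<le> n * exp (- c * h) + (\<Sum>r<R. real n * (real n - 1) * ((G (a (r + 2)) - G (a r))^2 * (1 - G (a r))^(n - 2)))
      + n * (n * G a0) + n * (1 - G (a R))^n"
proof -
  define B where "B r i j k = (if k = i \<or> k = j then {a r<..a (r + 2)} else {a r<..})" for r i j k :: nat
  define A where "A r i j = (if i \<noteq> j then (\<Inter>k<n. X k -` B r i j k \<inter> space M) else {})" for r i j
  define E1 where "E1 = (\<Union>i<n. X i -` {..a0} \<inter> space M)"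
  define E2 where "E2 = (\<Inter>k<n. X k -` {a R<..} \<inter> space M)"
  have Bs: "B r i j k \<in> sets borel" for r i j k by (simp add: B_def)
  have "0 \<in> {..<n}" using n1 by simp
  then have ne: "{..<n} \<noteq> {}" by blast
  have Aev: "A r i j \<in> events" for r i j
    unfolding A_def using ev_INT[OF Bs] by simp
  have E1ev: "E1 \<in> events" unfolding E1_def by (rule ev_UN) simp
  have E2ev: "E2 \<in> events" unfolding E2_def by (rule ev_INT) simp
  define Rf where "Rf \<omega> = real n * exp (- c * h) + (\<Sum>r<R. \<Sum>i<n. \<Sum>j<n. indicator (A r i j) \<omega>)
      + real n * indicator E1 \<omega> + real n * indicator E2 \<omega>" for \<omega>
  have intA: "integrable M (indicator (A r i j) :: 'a \<Rightarrow> real)" for r i j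
    using Aev[of r i j] by (simp add: integrable_indicator_iff Int_absorb2 sets.sets_into_space emeasure_finite less_top[symmetric])
  have intE1: "integrable M (indicator E1 :: 'a \<Rightarrow> real)" using E1ev by (simp add: integrable_indicator_iff Int_absorb2 sets.sets_into_space emeasure_finite less_top[symmetric])
  have intE2: "integrable M (indicator E2 :: 'a \<Rightarrow> real)" using E2ev by (simp add: integrable_indicator_iff Int_absorb2 sets.sets_into_space emeasure_finite less_top[symmetric])
  have intS: "integrable M (\<lambda>\<omega>. \<Sum>r<R. \<Sum>i<n. \<Sum>j<n. indicator (A r i j) \<omega> :: real)"
    using intA by auto
  have intR: "integrable M Rf" unfolding Rf_def using intS intE1 intE2 by auto
  have le: "(\<Sum>i<n. exp (- c * (X i \<omega> - Min ((\<lambda>i. X i \<omega>) ` {..<n})))) - 1 \<le> Rf \<omega>"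
    if \<omega>: "\<omega> \<in> space M" for \<omega>
  proof -
    have "indicator (A r i j) \<omega> = (if i \<noteq> j \<and> (\<forall>k<n. X k \<omega> \<in> (if k = i \<or> k = j then {a0 + real r * h<..a0 + real (r + 2) * h} else {a0 + real r * h<..})) then 1 else 0 :: real)" for r i j
      using \<omega> by (auto simp: A_def B_def a_def indicator_def)
    moreover have "real n * indicator E1 \<omega> = (if \<exists>i<n. X i \<omega> \<le> a0 then real n else 0)"
      using \<omega> by (auto simp: E1_def indicator_def)
    moreover have "real n * indicator E2 \<omega> = (if \<forall>k<n. X k \<omega> > a0 + real R * h then real n else 0)"
      using \<omega> by (auto simp: E2_def a_def indicator_def)
    ultimately have "Rf \<omega> = n * exp (- c * h)
     + (\<Sum>r<R. \<Sum>i<n. \<Sum>j<n. if i \<noteq> j \<and> (\<forall>k<n. X k \<omega> \<in> (if k = i \<or> k = j then {a0 + real r * h<..a0 + real (r + 2) * h} else {a0 + real r * h<..})) then 1 else 0)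
     + (if \<exists>i<n. X i \<omega> \<le> a0 then real n else 0)
     + (if \<forall>k<n. X k \<omega> > a0 + real R * h then real n else 0)"
      unfolding Rf_def by (simp only:)
    then show ?thesis using pointwise[OF n1 c h, of "\<lambda>i. X i \<omega>" a0 R] by simp
  qed
  have nnR: "0 \<le> Rf \<omega>" for \<omega> unfolding Rf_def by (intro add_nonneg_nonneg sum_nonneg) auto
  have "expectation (\<lambda>\<omega>. (\<Sum>i<n. exp (- c * (X i \<omega> - Min ((\<lambda>i. X i \<omega>) ` {..<n})))) - 1) \<le> expectation Rf"
    by (rule integral_mono'[OF intR le nnR])
  also have "expectation Rf = n * exp (- c * h) + (\<Sum>r<R. \<Sum>i<n. \<Sum>j<n. prob (A r i j)) + n * prob E1 + n * prob E2"
  proof -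
    have "expectation Rf = expectation (\<lambda>\<omega>. real n * exp (- c * h)) + expectation (\<lambda>\<omega>. \<Sum>r<R. \<Sum>i<n. \<Sum>j<n. indicator (A r i j) \<omega>)
       + expectation (\<lambda>\<omega>. real n * indicator E1 \<omega>) + expectation (\<lambda>\<omega>. real n * indicator E2 \<omega>)"
      unfolding Rf_def using intS intE1 intE2 by (subst integral_add | auto)+
    also have "expectation (\<lambda>\<omega>. \<Sum>r<R. \<Sum>i<n. \<Sum>j<n. indicator (A r i j) \<omega>) = (\<Sum>r<R. \<Sum>i<n. \<Sum>j<n. prob (A r i j))"
      using intA Aev by (simp add: Int_absorb2 sets.sets_into_space)
    finally show ?thesis using E1ev E2ev by (simp add: Int_absorb2 sets.sets_into_space prob_space)
  qed
  also have "(\<Sum>r<R. \<Sum>i<n. \<Sum>j<n. prob (A r i j)) = (\<Sum>r<R. real n * (real n - 1) * ((G (a (r + 2)) - G (a r))^2 * (1 - G (a r))^(n - 2)))"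
  proof (intro sum.cong refl)
    fix r
    have ar: "a r \<le> a (r + 2)" using h by (simp add: a_def)
    have "(\<Sum>i<n. \<Sum>j<n. prob (A r i j)) = (\<Sum>i<n. \<Sum>j<n. (if i \<noteq> j \<and> i \<in> {..<n} \<and> j \<in> {..<n} then 1 else 0) * ((G (a (r + 2)) - G (a r))^2 * (1 - G (a r))^(n - 2)))"
    proof (intro sum.cong refl)
      fix i j assume ij: "i \<in> {..<n}" "j \<in> {..<n}"
      show "prob (A r i j) = (if i \<noteq> j \<and> i \<in> {..<n} \<and> j \<in> {..<n} then 1 else 0) * ((G (a (r + 2)) - G (a r))^2 * (1 - G (a r))^(n - 2))"
      proof (cases "i = j")
        case True then show ?thesis by (simp add: A_def)
      next
        case False
        have "prob (A r i j) = prob (\<Inter>k<n. X k -` (if k = i \<or> k = j then {a r<..a (r + 2)} else {a r<..}) \<inter> space M)"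
          unfolding A_def B_def if_P[OF False] ..
        also have "\<dots> = (G (a (r + 2)) - G (a r))^2 * (1 - G (a r))^(n - 2)"
          by (rule prob_pair) (use ij False ar in auto)
        finally show ?thesis using ij False by simp
      qed
    qed
    also have "\<dots> = (\<Sum>i<n. \<Sum>j<n. (if i \<noteq> j \<and> i \<in> {..<n} \<and> j \<in> {..<n} then 1 else 0)) * ((G (a (r + 2)) - G (a r))^2 * (1 - G (a r))^(n - 2))"
      by (simp add: sum_distrib_right)
    also have "\<dots> = real n * (real n - 1) * ((G (a (r + 2)) - G (a r))^2 * (1 - G (a r))^(n - 2))"
      using pair_count[of "{..<n}" n] by simp
    finally show "(\<Sum>i<n. \<Sum>j<n. prob (A r i j)) = real n * (real n - 1) * ((G (a (r + 2)) - G (a r))^2 * (1 - G (a r))^(n - 2))" .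
  qed
  also have "prob E2 = (1 - G (a R))^n" unfolding E2_def by (rule prob_all_gt)
  also have "n * prob E1 \<le> n * (n * G a0)" unfolding E1_def by (intro mult_left_mono prob_some_le) auto
  finally show ?thesis by simp
qed

end


lemma ce_markov:
  fixes M :: "'a measure" and f :: "'a \<Rightarrow> real" and g :: "'a \<Rightarrow> real"
  assumes P: "prob_space M" and f: "f \<in> borel_measurable M" and g: "integrable M g"
    and gnn: "\<And>\<omega>. \<omega> \<in> space M \<Longrightarrow> 0 \<le> g \<omega>" and e: "0 < \<epsilon>"
  shows "measure M {\<omega> \<in> space M. \<bar>real_cond_exp M (vimage_algebra (space M) f borel) g \<omega>\<bar> > \<epsilon>}
     \<le> (\<integral>\<omega>. g \<omega> \<partial>M) / \<epsilon>"
proof -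
  interpret prob_space M by (rule P)
  define F where "F = vimage_algebra (space M) f borel"
  have sub: "subalgebra M F" unfolding subalgebra_def F_def
    using sets_image_in_sets[OF refl f] by simp
  interpret fms: finite_measure_subalgebra M F
    by unfold_locales (rule sub)
  define C where "C = real_cond_exp M F g"
  have gm: "g \<in> borel_measurable M" using g by (rule borel_measurable_integrable)
  have Cpos: "AE x in M. 0 \<le> C x" unfolding C_def
    by (rule fms.real_cond_exp_pos) (use gnn gm in auto)
  have Cint: "integrable M C" and Ceq: "(\<integral>x. C x \<partial>M) = (\<integral>x. g x \<partial>M)"
    unfolding C_def using fms.real_cond_exp_int[OF g] by auto
  have Cm: "C \<in> borel_measurable M" using Cint by (rule borel_measurable_integrable)
  have "measure M {\<omega> \<in> space M. \<bar>C \<omega>\<bar> > \<epsilon>} \<le> measure M {\<omega> \<in> space M. C \<omega> \<ge> \<epsilon>}"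
  proof (rule finite_measure_mono_AE)
    show "AE x in M. x \<in> {\<omega> \<in> space M. \<epsilon> < \<bar>C \<omega>\<bar>} \<longrightarrow> x \<in> {\<omega> \<in> space M. \<epsilon> \<le> C \<omega>}"
      using Cpos by eventually_elim auto
    show "{\<omega> \<in> space M. \<epsilon> \<le> C \<omega>} \<in> events" using Cm by measurable
  qed
  also have "\<dots> \<le> (\<integral>x. C x \<partial>M) / \<epsilon>"
    by (rule integral_Markov_inequality_measure[OF Cint sets.top Cpos e])
  finally show ?thesis unfolding C_def F_def Ceq[unfolded C_def F_def] .
qed


lemma Phi0_ge: "1/3 \<le> \<Phi> 0"
proof -
  have "\<phi> 0 \<le> \<Phi> 0" using mills_lower[of 0] by simp
  moreover have "1/3 \<le> \<phi> 0"
  proof -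
    have "sqrt (2 * pi) \<le> sqrt 9" using pi_less_4 by (intro real_sqrt_le_mono) simp
    then have "sqrt (2 * pi) \<le> 3" by simp
    then show ?thesis unfolding std_normal_density_def by (simp add: field_simps)
  qed
  ultimately show ?thesis by simp
qed

context iid begin

lemma per_k:
  fixes c D al au :: real
  assumes n3: "3 \<le> n" and c: "0 < c" and D1: "1 \<le> D"
    and hD: "2 * (2 * ln n / c) \<le> D"
    and al: "-1/2 \<le> al" and au: "-1/2 \<le> au"
    and bnds: "\<And>s. -D \<le> s \<Longrightarrow> s \<le> D \<Longrightarrow> (1 + al) * \<Phi> s \<le> G s \<and> G s \<le> (1 + au) * \<Phi> s"
    and Gmono: "\<And>x y. x \<le> y \<Longrightarrow> G x \<le> G y" and G0: "\<And>s. 0 \<le> G s" and G1: "\<And>s. G s \<le> 1"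
  defines "h \<equiv> 2 * ln n / c"
  defines "\<epsilon> \<equiv> max 0 ((1 + au) / (1 + al) * exp (2 * h * (1 + 2 * D)) - 1)"
  shows "expectation (\<lambda>\<omega>. (\<Sum>i<n. exp (- c * (X i \<omega> - Min ((\<lambda>i. X i \<omega>) ` {..<n})))) - 1)
    \<le> 1 / n + real n * (real n - 1) * (2 * \<epsilon> * ((1 + \<epsilon>) / (real n - 2))^2)
       + (real n)^2 * ((1 + au) * exp (- D\<^sup>2 / 2)) + n * (5/6)^n"
proof -
  have lnpos: "0 < ln (real n)" using n3 by simp
  have h: "0 < h" unfolding h_def using lnpos c by simp
  define R where "R = nat (ceiling (D / h))"
  define a where "a r = - D + real r * h" for r :: nat
  have RD: "D / h \<le> real R" unfolding R_def by linarith
  have "0 \<le> D / h" using D1 h by simp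
  then have Rc: "real R = real_of_int (ceiling (D / h))" unfolding R_def by simp
  have RD2: "real R < D / h + 1" unfolding Rc by linarith
  have aR0: "0 \<le> a R" unfolding a_def using RD h by (simp add: divide_le_eq mult.commute)
  have aR1: "a (R + 1) \<le> D"
  proof -
    have "real (R + 1) * h < (D / h + 2) * h" using RD2 h by (intro mult_strict_right_mono) auto
    also have "\<dots> = D + 2 * h" using h by (simp add: field_simps)
    finally show ?thesis unfolding a_def using hD h_def by simp
  qed
  have amono: "a r \<le> a s" if "r \<le> s" for r s unfolding a_def using that h by (simp add: mult_right_mono)
  have ET: "expectation (\<lambda>\<omega>. (\<Sum>i<n. exp (- c * (X i \<omega> - Min ((\<lambda>i. X i \<omega>) ` {..<n})))) - 1)
    \<le> n * exp (- c * h) + (\<Sum>r<R. real n * (real n - 1) * ((G (a (r + 2)) - G (a r))^2 * (1 - G (a r))^(n - 2)))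
      + n * (n * G (- D)) + n * (1 - G (a R))^n"
    using ET_bound[of c h "-D" R] c h unfolding a_def by simp
  have t1: "n * exp (- c * h) = 1 / n"
  proof -
    have "- c * h = - 2 * ln n" unfolding h_def using c by simp
    then have "exp (- c * h) = exp (ln n) powr (- 2)"
      by (simp add: powr_def)
    also have "\<dots> = 1 / (real n)^2" using n3 by (simp add: powr_minus powr_realpow inverse_eq_divide)
    finally show ?thesis by (simp add: power2_eq_square)
  qed
  define q where "q r = G (a r)" for r
  have step: "q (r + 2) \<le> (1 + \<epsilon>) * q r" if "r < R" for r
  proof -
    have ar: "-D \<le> a r" unfolding a_def using h by simp
    have ar2: "a (r + 2) \<le> D" using aR1 amono[of "r + 2" "R + 1"] that by simp
    have ar2': "a (r + 2) = a r + 2 * h" unfolding a_def by (simp add: algebra_simps)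
    have arD: "a r \<le> D" using ar2 ar2' h by simp
    have absr: "\<bar>a r\<bar> \<le> D" and absr2: "\<bar>a (r + 2)\<bar> \<le> D" using ar arD ar2 ar2' h by auto
    have "G (a (r + 2)) \<le> (1 + au) * \<Phi> (a (r + 2))" using bnds[of "a (r + 2)"] ar2 ar2' ar h by simp
    also have "\<dots> \<le> (1 + au) * (\<Phi> (a r) * exp ((a (r + 2) - a r) * (1 + \<bar>a r\<bar> + \<bar>a (r + 2)\<bar>)))"
      using au ar2' h by (intro mult_left_mono Phi_ratio) auto
    also have "\<dots> \<le> (1 + au) * (\<Phi> (a r) * exp (2 * h * (1 + 2 * D)))"
    proof -
      have "(a (r + 2) - a r) * (1 + \<bar>a r\<bar> + \<bar>a (r + 2)\<bar>) \<le> 2 * h * (1 + 2 * D)"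
        using ar2' absr absr2 h by (intro mult_mono) auto
      then show ?thesis using au Phi_pos[of "a r"] by (intro mult_left_mono) auto
    qed
    also have "\<dots> = ((1 + au) / (1 + al) * exp (2 * h * (1 + 2 * D))) * ((1 + al) * \<Phi> (a r))"
      using al by (simp add: field_simps)
    also have "\<dots> \<le> ((1 + au) / (1 + al) * exp (2 * h * (1 + 2 * D))) * G (a r)"
      using bnds[of "a r"] ar arD al au by (intro mult_left_mono) auto
    also have "\<dots> \<le> (1 + \<epsilon>) * G (a r)"
      unfolding \<epsilon>_def using G0[of "a r"] by (intro mult_right_mono) auto
    finally show ?thesis unfolding q_def .
  qed
  have mid: "(\<Sum>r<R. real n * (real n - 1) * ((G (a (r + 2)) - G (a r))^2 * (1 - G (a r))^(n - 2)))
      \<le> real n * (real n - 1) * (2 * \<epsilon> * ((1 + \<epsilon>) / (real n - 2))^2)"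
  proof -
    have "(\<Sum>r<R. real n * (real n - 1) * ((G (a (r + 2)) - G (a r))^2 * (1 - G (a r))^(n - 2)))
       = real n * (real n - 1) * (\<Sum>r<R. (q (r + 2) - q r)^2 * (1 - q r)^(n - 2))"
      by (simp add: sum_distrib_left q_def)
    also have "\<dots> \<le> real n * (real n - 1) * (\<Sum>r<R. (q (r + 2) - q r)^2 * exp (- (real n - 2) * q r))"
    proof (rule mult_left_mono, rule sum_mono)
      fix r
      have "(1 - q r)^(n - 2) \<le> exp (- q r)^(n - 2)"
        using G1 unfolding q_def by (intro power_mono) (auto simp: exp_ge_add_one_self[of "- G (a r)", simplified])
      also have "\<dots> = exp (- (real n - 2) * q r)" using n3
        by (simp add: exp_of_nat_mult[symmetric] of_nat_diff algebra_simps)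
      finally show "(q (r + 2) - q r)^2 * (1 - q r)^(n - 2) \<le> (q (r + 2) - q r)^2 * exp (- (real n - 2) * q r)"
        by (intro mult_left_mono) auto
    qed (use n3 in auto)
    also have "\<dots> \<le> real n * (real n - 1) * (2 * \<epsilon> * ((1 + \<epsilon>) / (real n - 2))^2)"
    proof (rule mult_left_mono, rule tele_bound)
      show "q r \<le> q (Suc r)" for r unfolding q_def by (intro Gmono amono) simp
    qed (use n3 G0 step in \<open>auto simp: q_def \<epsilon>_def\<close>)
    finally show ?thesis .
  qed
  have t3: "n * (n * G (- D)) \<le> (real n)^2 * ((1 + au) * exp (- D\<^sup>2 / 2))"
  proof -
    have "G (- D) \<le> (1 + au) * \<Phi> (- D)" using bnds[of "-D"] D1 by simp
    also have "\<dots> \<le> (1 + au) * exp (- D\<^sup>2 / 2)" using au Phi_tail[OF D1] by (intro mult_left_mono) auto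
    finally have "G (- D) \<le> (1 + au) * exp (- D\<^sup>2 / 2)" .
    then have "real n * (real n * G (- D)) \<le> real n * (real n * ((1 + au) * exp (- D\<^sup>2 / 2)))"
      by (intro mult_left_mono) auto
    then show ?thesis by (simp add: power2_eq_square mult.assoc)
  qed
  have t4: "n * (1 - G (a R))^n \<le> n * (5/6)^n"
  proof -
    have "(1 + al) * \<Phi> (a R) \<le> G (a R)" using bnds[of "a R"] aR0 aR1 amono[of R "R+1"] D1 by simp
    moreover have "1/6 \<le> (1 + al) * \<Phi> (a R)"
    proof -
      have "1/3 \<le> \<Phi> (a R)" using Phi0_ge Phi_mono[OF aR0] by simp
      then have "(1/2) * (1/3) \<le> (1 + al) * \<Phi> (a R)" using al by (intro mult_mono) auto
      then show ?thesis by simp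
    qed
    ultimately have "1 - G (a R) \<le> 5/6" by simp
    then show ?thesis using G1[of "a R"] by (intro mult_left_mono power_mono) auto
  qed
  show ?thesis using ET t1 mid t3 t4 by linarith
qed

end


context iid begin

lemma Min_meas: "(\<lambda>\<omega>. Min ((\<lambda>i. X i \<omega>) ` {..<n})) \<in> borel_measurable M"
  by (rule borel_measurable_Min) (auto intro: meas)

lemma Tsum_meas: "(\<lambda>\<omega>. (\<Sum>i<n. exp (- c * (X i \<omega> - Min ((\<lambda>i. X i \<omega>) ` {..<n})))) - 1) \<in> borel_measurable M"
proof -
  have "(\<lambda>\<omega>. exp (- c * (X i \<omega> - Min ((\<lambda>i. X i \<omega>) ` {..<n})))) \<in> borel_measurable M" if "i \<in> {..<n}" for i
  proof -
    have "i < n" using that by simp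
    note [measurable] = meas[OF this] Min_meas
    show ?thesis by measurable
  qed
  then show ?thesis by (intro borel_measurable_diff borel_measurable_sum) auto
qed

lemma Tsum_bound:
  assumes "0 \<le> c"
  shows "\<bar>(\<Sum>i<n. exp (- c * (X i \<omega> - Min ((\<lambda>i. X i \<omega>) ` {..<n})))) - 1\<bar> \<le> n"
proof -
  have le1: "exp (- c * (X i \<omega> - Min ((\<lambda>i. X i \<omega>) ` {..<n}))) \<le> 1" if "i < n" for i
  proof -
    have "Min ((\<lambda>i. X i \<omega>) ` {..<n}) \<le> X i \<omega>" using that by (intro Min_le) auto
    then show ?thesis using assms by (simp add: mult_nonneg_nonneg)
  qed
  have "(\<Sum>i<n. exp (- c * (X i \<omega> - Min ((\<lambda>i. X i \<omega>) ` {..<n})))) \<le> (\<Sum>i<n. 1)"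
    by (intro sum_mono le1) auto
  moreover have "0 \<le> (\<Sum>i<n. exp (- c * (X i \<omega> - Min ((\<lambda>i. X i \<omega>) ` {..<n}))))"
    by (intro sum_nonneg) auto
  ultimately show ?thesis using n1 by simp
qed

lemma Tsum_integrable:
  assumes "0 \<le> c"
  shows "integrable M (\<lambda>\<omega>. (\<Sum>i<n. exp (- c * (X i \<omega> - Min ((\<lambda>i. X i \<omega>) ` {..<n})))) - 1)"
  by (rule integrable_const_bound[where B="real n"]) (use Tsum_bound[OF assms] Tsum_meas in auto)

end


lemma lim_mid: "((\<lambda>x::real. x * (x - 1) / (x - 2)^2) \<longlongrightarrow> 1) at_top"
  by real_asymp

lemma lim_geo: "(\<lambda>x::nat. real x * (5/6)^x) \<longlonglongrightarrow> 0"
  by real_asymp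

lemma lim_exp4: "((\<lambda>x::real. exp (- x / 4)) \<longlongrightarrow> 0) at_top"
  by real_asymp

lemma lim_hD:
  fixes n d :: "nat \<Rightarrow> nat" and \<sigma> \<eta> :: real
  assumes sigma: "0 < \<sigma>" and eta: "0 < \<eta>" "\<eta> < 1/6"
    and n_lim: "filterlim n at_top sequentially" and d_lim: "filterlim d at_top sequentially"
    and rate: "(\<lambda>k. ln (real (n k)) / real (d k) powr (2 * \<eta>)) \<longlonglongrightarrow> 0"
  shows "(\<lambda>k. (2 * ln (real (n k)) / (\<sigma> * sqrt (real (d k)))) * real (d k) powr \<eta>) \<longlonglongrightarrow> 0"
proof (rule tendsto_sandwich[where f="\<lambda>_. 0" and h="\<lambda>k. (2 / \<sigma>) * (ln (real (n k)) / real (d k) powr (2 * \<eta>))"])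
  have ev1: "eventually (\<lambda>k. 1 \<le> n k) sequentially"
    using n_lim unfolding filterlim_at_top by blast
  have ev2: "eventually (\<lambda>k. 1 \<le> d k) sequentially"
    using d_lim unfolding filterlim_at_top by blast
  have ev: "eventually (\<lambda>k. 1 \<le> n k \<and> 1 \<le> d k) sequentially"
    using ev1 ev2 by (intro eventually_conj)
  show "eventually (\<lambda>k. 0 \<le> (2 * ln (real (n k)) / (\<sigma> * sqrt (real (d k)))) * real (d k) powr \<eta>) sequentially"
    using ev by eventually_elim (use sigma in auto)
  show "eventually (\<lambda>k. (2 * ln (real (n k)) / (\<sigma> * sqrt (real (d k)))) * real (d k) powr \<eta>
      \<le> (2 / \<sigma>) * (ln (real (n k)) / real (d k) powr (2 * \<eta>))) sequentially"
    using ev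
  proof eventually_elim
    case (elim k)
    define x where "x = real (d k)"
    define L where "L = ln (real (n k))"
    have x1: "1 \<le> x" and L0: "0 \<le> L" using elim by (auto simp: x_def L_def)
    have sq: "sqrt x = x powr (1/2)" using x1 by (simp add: powr_half_sqrt)
    have f: "x powr \<eta> / sqrt x = x powr (\<eta> - 1/2)" using x1 by (simp add: sq powr_diff)
    have e0: "(2 * L / (\<sigma> * sqrt x)) * x powr \<eta> = (2/\<sigma>) * L * (x powr \<eta> / sqrt x)"
      by (simp add: divide_inverse mult_ac)
    have e1: "(2 * L / (\<sigma> * sqrt x)) * x powr \<eta> = (2 / \<sigma>) * L * x powr (\<eta> - 1/2)"
      unfolding e0 f ..
    have "x powr (\<eta> - 1/2) \<le> x powr (- (2 * \<eta>))" using x1 eta by (intro powr_mono) auto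
    also have "x powr (- (2 * \<eta>)) = 1 / x powr (2 * \<eta>)" using x1 by (simp add: powr_minus divide_inverse)
    finally have "(2 / \<sigma>) * L * x powr (\<eta> - 1/2) \<le> (2 / \<sigma>) * L * (1 / x powr (2 * \<eta>))"
      using sigma L0 by (intro mult_left_mono) auto
    then have "(2 * L / (\<sigma> * sqrt x)) * x powr \<eta> \<le> (2 / \<sigma>) * (L / x powr (2 * \<eta>))"
      unfolding e1 by simp
    then show ?case unfolding x_def L_def by simp
  qed
  show "(\<lambda>_. 0) \<longlonglongrightarrow> (0::real)" by simp
  show "(\<lambda>k. (2 / \<sigma>) * (ln (real (n k)) / real (d k) powr (2 * \<eta>))) \<longlonglongrightarrow> 0"
    using tendsto_mult[OF tendsto_const[of "2/\<sigma>"] rate] by simp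
qed

lemma lim_tail:
  fixes n d :: "nat \<Rightarrow> nat" and \<eta> :: real
  assumes eta: "0 < \<eta>"
    and n_lim: "filterlim n at_top sequentially" and d_lim: "filterlim d at_top sequentially"
    and rate: "(\<lambda>k. ln (real (n k)) / real (d k) powr (2 * \<eta>)) \<longlonglongrightarrow> 0"
  shows "(\<lambda>k. (real (n k))^2 * exp (- (real (d k) powr \<eta>)\<^sup>2 / 2)) \<longlonglongrightarrow> 0"
proof -
  define u where "u k = real (d k) powr (2 * \<eta>)" for k
  have Dd: "filterlim (\<lambda>k. real (d k)) at_top sequentially"
    by (rule filterlim_compose[OF filterlim_real_sequentially d_lim])
  have u_lim: "filterlim u at_top sequentially"
    unfolding u_def by (rule filterlim_compose[OF real_powr_at_top Dd]) (use eta in simp)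
  have usq: "(real (d k) powr \<eta>)\<^sup>2 = u k" for k
    unfolding u_def by (simp add: power2_eq_square powr_add[symmetric])
  have ev1: "eventually (\<lambda>k. 1 \<le> n k) sequentially"
    using n_lim unfolding filterlim_at_top by blast
  have ev2: "eventually (\<lambda>k. 0 < u k) sequentially"
    using u_lim unfolding filterlim_at_top_dense by blast
  have ev3: "eventually (\<lambda>k. ln (real (n k)) / u k < 1/8) sequentially"
    using order_tendstoD(2)[OF rate, of "1/8"] unfolding u_def by simp
  have ev: "eventually (\<lambda>k. 1 \<le> n k \<and> 0 < u k \<and> ln (real (n k)) / u k < 1/8) sequentially"
    using ev1 ev2 ev3 by (intro eventually_conj)
  show ?thesis
  proof (rule tendsto_sandwich[where f="\<lambda>_. 0" and h="\<lambda>k. exp (- u k / 4)"])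
    show "eventually (\<lambda>k. 0 \<le> (real (n k))^2 * exp (- (real (d k) powr \<eta>)\<^sup>2 / 2)) sequentially" by simp
    show "eventually (\<lambda>k. (real (n k))^2 * exp (- (real (d k) powr \<eta>)\<^sup>2 / 2) \<le> exp (- u k / 4)) sequentially"
      using ev
    proof eventually_elim
      case (elim k)
      define L where "L = ln (real (n k))"
      have npos: "0 < real (n k)" using elim by simp
      have "L / u k < 1 / 8" "0 < u k" using elim unfolding L_def by auto
      then have "L * 8 < u k" by (simp add: divide_less_eq)
      then have "2 * L \<le> u k / 4" by linarith
      have "(real (n k))^2 = exp (2 * L)"
      proof -
        have "exp (2 * L) = exp L * exp L" unfolding mult_2 by (rule exp_add)
        also have "\<dots> = real (n k) * real (n k)" unfolding L_def using npos by simp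
        finally show ?thesis by (simp add: power2_eq_square)
      qed
      then have "(real (n k))^2 * exp (- (real (d k) powr \<eta>)\<^sup>2 / 2) = exp (2 * L - u k / 2)"
      proof -
        have "exp (2 * L + (- u k / 2)) = exp (2 * L) * exp (- u k / 2)" by (rule exp_add)
        then have "exp (2 * L - u k / 2) = exp (2 * L) * exp (- u k / 2)" by simp
        then show ?thesis unfolding usq \<open>(real (n k))^2 = exp (2 * L)\<close> by simp
      qed
      also have "\<dots> \<le> exp (- u k / 4)" using \<open>2 * L \<le> u k / 4\<close> by simp
      finally show ?case .
    qed
    show "(\<lambda>_. 0) \<longlonglongrightarrow> (0::real)" by simp
    show "(\<lambda>k. exp (- u k / 4)) \<longlonglongrightarrow> 0"
      by (rule filterlim_compose[OF lim_exp4 u_lim])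
  qed
qed


theorem lemma3p1:
  fixes \<sigma> \<eta> :: real
    and n d :: "nat \<Rightarrow> nat"
    and M :: "nat \<Rightarrow> 'a measure"
    and S :: "nat \<Rightarrow> nat \<Rightarrow> 'a \<Rightarrow> real"
    and G :: "nat \<Rightarrow> real \<Rightarrow> real"
    and \<alpha>l \<alpha>u :: "nat \<Rightarrow> real"
  assumes sigma_pos: "\<sigma> > 0"
    and eta: "0 < \<eta>" "\<eta> < 1 / 6"
    and prob: "\<And>k. prob_space (M k)"
    and meas: "\<And>k i. i < n k \<Longrightarrow> S k i \<in> borel_measurable (M k)"
    and indep: "\<And>k. prob_space.indep_vars (M k) (\<lambda>_. borel) (S k) {..<n k}"
    and cdf_G: "\<And>k i. i < n k \<Longrightarrow> cdf (distr (M k) borel (S k i)) = G (d k)"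
    and alpha_l: "\<alpha>l \<longlonglongrightarrow> 0"
    and alpha_u: "\<alpha>u \<longlonglongrightarrow> 0"
    and bounds: "\<And>k s. - (real (d k) powr \<eta>) \<le> s \<Longrightarrow> s \<le> real (d k) powr \<eta> \<Longrightarrow>
        (1 + \<alpha>l k) * std_normal_cdf s \<le> G (d k) s \<and> G (d k) s \<le> (1 + \<alpha>u k) * std_normal_cdf s"
    and n_lim: "filterlim n at_top sequentially"
    and d_lim: "filterlim d at_top sequentially"
    and rate: "(\<lambda>k. ln (real (n k)) / real (d k) powr (2 * \<eta>)) \<longlonglongrightarrow> 0"
  shows "\<forall>\<epsilon>>0. (\<lambda>k. measure (M k)
           {\<omega> \<in> space (M k).
              \<bar>real_cond_exp (M k)
                 (vimage_algebra (space (M k)) (\<lambda>\<omega>. order_stat (\<lambda>i. S k i \<omega>) (n k) 1) borel)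
                 (\<lambda>\<omega>. T_stat \<sigma> (n k) (d k) (\<lambda>i. S k i \<omega>)) \<omega>\<bar> > \<epsilon>}) \<longlonglongrightarrow> 0"
proof (intro allI impI)
  fix \<epsilon> :: real assume e: "0 < \<epsilon>"
  define N where "N k = real (n k)" for k
  define Dd where "Dd k = real (d k)" for k
  define D where "D k = Dd k powr \<eta>" for k
  define c where "c k = \<sigma> * sqrt (Dd k)" for k
  define h where "h k = 2 * ln (N k) / c k" for k
  define ep where "ep k = max 0 ((1 + \<alpha>u k) / (1 + \<alpha>l k) * exp (2 * h k * (1 + 2 * D k)) - 1)" for k
  define B where "B k = 1 / N k + N k * (N k - 1) * (2 * ep k * ((1 + ep k) / (N k - 2))^2)
      + (N k)^2 * ((1 + \<alpha>u k) * exp (- (D k)\<^sup>2 / 2)) + N k * (5/6)^(n k)" for k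
  define Pm where "Pm k = measure (M k)
           {\<omega> \<in> space (M k).
              \<bar>real_cond_exp (M k)
                 (vimage_algebra (space (M k)) (\<lambda>\<omega>. order_stat (\<lambda>i. S k i \<omega>) (n k) 1) borel)
                 (\<lambda>\<omega>. T_stat \<sigma> (n k) (d k) (\<lambda>i. S k i \<omega>)) \<omega>\<bar> > \<epsilon>}" for k
  have N_lim: "filterlim N at_top sequentially"
    unfolding N_def by (rule filterlim_compose[OF filterlim_real_sequentially n_lim])
  have hD: "(\<lambda>k. h k * D k) \<longlonglongrightarrow> 0"
    using lim_hD[OF sigma_pos eta n_lim d_lim rate] unfolding h_def D_def c_def N_def Dd_def .
  have ev_n3: "eventually (\<lambda>k. 3 \<le> n k) sequentially"
    using n_lim unfolding filterlim_at_top by blast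
  have ev_d1: "eventually (\<lambda>k. 1 \<le> d k) sequentially"
    using d_lim unfolding filterlim_at_top by blast
  have ev_hD: "eventually (\<lambda>k. h k * D k < 1/2) sequentially"
    using order_tendstoD(2)[OF hD, of "1/2"] by simp
  have ev_al: "eventually (\<lambda>k. -1/2 < \<alpha>l k) sequentially"
    using order_tendstoD(1)[OF alpha_l, of "-1/2"] by simp
  have ev_au: "eventually (\<lambda>k. -1/2 < \<alpha>u k) sequentially"
    using order_tendstoD(1)[OF alpha_u, of "-1/2"] by simp
  have basic: "1 \<le> Dd k \<and> 1 \<le> D k \<and> 0 < c k \<and> 3 \<le> N k \<and> 0 \<le> h k" if "3 \<le> n k" "1 \<le> d k" for k
  proof -
    have Dd1: "1 \<le> Dd k" using that by (simp add: Dd_def)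
    have D1: "1 \<le> D k" unfolding D_def using Dd1 eta by (simp add: ge_one_powr_ge_zero)
    have cpos: "0 < c k" unfolding c_def using Dd1 sigma_pos by simp
    have N3: "3 \<le> N k" using that by (simp add: N_def)
    have "0 \<le> ln (N k)" using N3 by simp
    then have "0 \<le> h k" unfolding h_def using cpos by simp
    then show ?thesis using Dd1 D1 cpos N3 by simp
  qed
  have h_lim: "h \<longlonglongrightarrow> 0"
  proof (rule tendsto_sandwich[where f="\<lambda>_. 0" and h="\<lambda>k. h k * D k"])
    show "eventually (\<lambda>k. 0 \<le> h k) sequentially"
      using ev_n3 ev_d1 by eventually_elim (use basic in auto)
    show "eventually (\<lambda>k. h k \<le> h k * D k) sequentially"
      using ev_n3 ev_d1
    proof eventually_elim
      case (elim k)
      then have "1 \<le> D k" "0 \<le> h k" using basic by auto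
      then show ?case using mult_left_mono[of 1 "D k" "h k"] by simp
    qed
  qed (use hD in auto)
  have ep_lim: "ep \<longlonglongrightarrow> 0"
  proof -
    have eq: "2 * h k * (1 + 2 * D k) = 2 * h k + 4 * (h k * D k)" for k by (simp add: algebra_simps)
    have "(\<lambda>k. (1 + \<alpha>u k) / (1 + \<alpha>l k) * exp (2 * h k + 4 * (h k * D k)) - 1)
        \<longlonglongrightarrow> (1 + 0) / (1 + 0) * exp (2 * 0 + 4 * 0) - 1"
      by (intro tendsto_intros alpha_u alpha_l h_lim hD) simp
    then have "(\<lambda>k. (1 + \<alpha>u k) / (1 + \<alpha>l k) * exp (2 * h k * (1 + 2 * D k)) - 1) \<longlonglongrightarrow> 0"
      unfolding eq by simp
    from tendsto_max[OF tendsto_const[of 0] this] show ?thesis unfolding ep_def[abs_def] by simp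
  qed
  have B_lim: "B \<longlonglongrightarrow> 0"
  proof -
    have t1: "(\<lambda>k. 1 / N k) \<longlonglongrightarrow> 0"
      by (rule tendsto_divide_0[OF tendsto_const filterlim_at_top_imp_at_infinity[OF N_lim]])
    have eq2: "N k * (N k - 1) * (2 * ep k * ((1 + ep k) / (N k - 2))^2)
        = (N k * (N k - 1) / (N k - 2)^2) * (2 * ep k * (1 + ep k)^2)" for k
      by (simp only: power_divide) (simp add: divide_inverse mult_ac)
    have m1: "(\<lambda>k. N k * (N k - 1) / (N k - 2)^2) \<longlonglongrightarrow> 1"
      using filterlim_compose[OF lim_mid N_lim] by simp
    have m2: "(\<lambda>k. 2 * ep k * (1 + ep k)^2) \<longlonglongrightarrow> 2 * 0 * (1 + 0)^2"
      by (intro tendsto_intros ep_lim)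
    have t2: "(\<lambda>k. N k * (N k - 1) * (2 * ep k * ((1 + ep k) / (N k - 2))^2)) \<longlonglongrightarrow> 0"
      unfolding eq2 using tendsto_mult[OF m1 m2] by simp
    have eq3: "(N k)^2 * ((1 + \<alpha>u k) * exp (- (D k)\<^sup>2 / 2)) = ((N k)^2 * exp (- (D k)\<^sup>2 / 2)) * (1 + \<alpha>u k)" for k
      by (simp add: mult_ac)
    have m3: "(\<lambda>k. (N k)^2 * exp (- (D k)\<^sup>2 / 2)) \<longlonglongrightarrow> 0"
      using lim_tail[OF eta(1) n_lim d_lim rate] unfolding N_def D_def Dd_def .
    have t3: "(\<lambda>k. (N k)^2 * ((1 + \<alpha>u k) * exp (- (D k)\<^sup>2 / 2))) \<longlonglongrightarrow> 0"
      unfolding eq3 using tendsto_mult[OF m3 tendsto_add[OF tendsto_const alpha_u]] by simp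
    have t4: "(\<lambda>k. N k * (5/6)^(n k)) \<longlonglongrightarrow> 0"
      unfolding N_def using filterlim_compose[OF lim_geo n_lim] by simp
    show ?thesis unfolding B_def[abs_def] using tendsto_add[OF tendsto_add[OF tendsto_add[OF t1 t2] t3] t4] by simp
  qed
  have main: "eventually (\<lambda>k. Pm k \<le> B k / \<epsilon>) sequentially"
    using ev_n3 ev_d1 ev_hD ev_al ev_au
  proof eventually_elim
    case (elim k)
    then have nk3: "3 \<le> n k" and dk1: "1 \<le> d k" and hDk: "h k * D k < 1/2"
      and al: "-1/2 \<le> \<alpha>l k" and au: "-1/2 \<le> \<alpha>u k" by auto
    have Dd1: "1 \<le> Dd k" and D1: "1 \<le> D k" and cpos: "0 < c k" and h0: "0 \<le> h k"
      using basic[OF nk3 dk1] by auto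
    interpret P: prob_space "M k" by (rule prob)
    have hD2: "2 * (2 * ln (real (n k)) / c k) \<le> D k"
    proof -
      have "h k \<le> h k * D k" using mult_left_mono[OF D1 h0] by simp
      then have "2 * h k \<le> 1" using hDk by simp
      then show ?thesis using D1 unfolding h_def N_def by simp
    qed
    have cdfG': "measure (M k) (S k i -` {..s} \<inter> space (M k)) = G (d k) s" if "i < n k" for i s
    proof -
      have "G (d k) s = cdf (distr (M k) borel (S k i)) s" using cdf_G[OF that] by simp
      also have "\<dots> = measure (distr (M k) borel (S k i)) {..s}" by (simp add: cdf_def)
      also have "\<dots> = measure (M k) (S k i -` {..s} \<inter> space (M k))"
        by (rule measure_distr[OF meas[OF that]]) simp
      finally show ?thesis by simp
    qed
    have iidk: "iid (M k) (S k) (n k) (G (d k))"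
      by (intro iid.intro prob iid_axioms.intro) (use nk3 meas indep cdfG' in auto)
    interpret I: iid "M k" "S k" "n k" "G (d k)" by (rule iidk)
    have n0: "0 < n k" using nk3 by simp
    interpret RD: real_distribution "distr (M k) borel (S k 0)"
      using P.real_distribution_distr meas[OF n0] by auto
    have Gc: "G (d k) = cdf (distr (M k) borel (S k 0))" using cdf_G[OF n0] by simp
    have Gmono: "\<And>x y. x \<le> y \<Longrightarrow> G (d k) x \<le> G (d k) y" unfolding Gc by (rule RD.cdf_nondecreasing)
    have G0: "\<And>s. 0 \<le> G (d k) s" unfolding Gc by (rule RD.cdf_nonneg)
    have G1: "\<And>s. G (d k) s \<le> 1" unfolding Gc by (rule RD.cdf_bounded_prob)
    have bnds: "\<And>s. - D k \<le> s \<Longrightarrow> s \<le> D k \<Longrightarrow> (1 + \<alpha>l k) * \<Phi> s \<le> G (d k) s \<and> G (d k) s \<le> (1 + \<alpha>u k) * \<Phi> s"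
      using bounds unfolding D_def Dd_def by blast
    define Tsum where "Tsum \<omega> = (\<Sum>i<n k. exp (- c k * (S k i \<omega> - Min ((\<lambda>i. S k i \<omega>) ` {..<n k})))) - 1" for \<omega>
    have PK: "P.expectation Tsum \<le> B k"
      using I.per_k[OF nk3 cpos D1 hD2 al au bnds Gmono G0 G1]
      unfolding B_def ep_def h_def N_def Tsum_def by simp
    have Teq: "(\<lambda>\<omega>. T_stat \<sigma> (n k) (d k) (\<lambda>i. S k i \<omega>)) = Tsum"
    proof
      fix \<omega>
      show "T_stat \<sigma> (n k) (d k) (\<lambda>i. S k i \<omega>) = Tsum \<omega>"
        using T_stat_repr[of "n k" \<sigma> "d k" "\<lambda>i. S k i \<omega>"] nk3 unfolding Tsum_def c_def Dd_def by simp
    qed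
    have Oeq: "(\<lambda>\<omega>. order_stat (\<lambda>i. S k i \<omega>) (n k) 1) = (\<lambda>\<omega>. Min ((\<lambda>i. S k i \<omega>) ` {..<n k}))"
      using order_stat_1 nk3 by auto
    have fm: "(\<lambda>\<omega>. order_stat (\<lambda>i. S k i \<omega>) (n k) 1) \<in> borel_measurable (M k)"
      unfolding Oeq by (rule I.Min_meas)
    have Tint: "integrable (M k) (\<lambda>\<omega>. T_stat \<sigma> (n k) (d k) (\<lambda>i. S k i \<omega>))"
      unfolding Teq Tsum_def using I.Tsum_integrable[of "c k"] cpos by simp
    have Tnn: "\<And>\<omega>. \<omega> \<in> space (M k) \<Longrightarrow> 0 \<le> T_stat \<sigma> (n k) (d k) (\<lambda>i. S k i \<omega>)"
      unfolding T_stat_def by (intro sum_nonneg) auto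
    have "Pm k \<le> (\<integral>\<omega>. T_stat \<sigma> (n k) (d k) (\<lambda>i. S k i \<omega>) \<partial>M k) / \<epsilon>"
      unfolding Pm_def by (rule ce_markov[OF prob fm Tint Tnn e])
    also have "(\<integral>\<omega>. T_stat \<sigma> (n k) (d k) (\<lambda>i. S k i \<omega>) \<partial>M k) = P.expectation Tsum"
      unfolding Teq ..
    also have "P.expectation Tsum / \<epsilon> \<le> B k / \<epsilon>" using PK e by (simp add: divide_right_mono)
    finally show ?case .
  qed
  show "Pm \<longlonglongrightarrow> 0"
  proof (rule tendsto_sandwich[where f="\<lambda>_. 0" and h="\<lambda>k. B k / \<epsilon>"])
    show "eventually (\<lambda>k. 0 \<le> Pm k) sequentially" by (simp add: Pm_def)
    show "eventually (\<lambda>k. Pm k \<le> B k / \<epsilon>) sequentially" by (rule main)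
    show "(\<lambda>k. B k / \<epsilon>) \<longlonglongrightarrow> 0" using tendsto_divide[OF B_lim tendsto_const[of \<epsilon>]] e by simp
  qed simp
qed


end
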